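(* Let $n,m,k$ be nonnegative integers with $m\le n$ and $k\ge 1$. If $p$ is a prime with $p>3$, then $$\binom{np^k}{mp^k}\equiv \binom{np^{\lfloor (k-1)/3\rfloor}}{mp^{\lfloor (k-1)/3\rfloor}}\pmod{p^k}.$$ Furthermore, $$\binom{n\cdot 2^k}{m\cdot 2^k}\equiv \binom{n\cdot 2^{\lfloor k/2\rfloor}}{m\cdot 2^{\lfloor k/2\rfloor}}\pmod{2^k}\quad\text{and}\quad \binom{n\cdot 3^k}{m\cdot 3^k}\equiv \binom{n\cdot 3^{\lfloor (k-1)/2\rfloor}}{m\cdot 3^{\lfloor (k-1)/2\rfloor}}\pmod{3^k}.$$
   Context: $\lfloor a\rfloor$ denotes the greatest integer less than or equal to $a$. *)

theory Defs
  imports "HOL-Number_Theory.Number_Theory"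
begin

end

theory Submission
  imports Defs
begin

definition UU :: "nat \<Rightarrow> nat \<Rightarrow> nat set" where
  "UU p q = {j \<in> {1..q}. \<not> p dvd j}"
definition ff :: "nat \<Rightarrow> nat \<Rightarrow> nat \<Rightarrow> nat" where
  "ff p q t = (\<Prod>j\<in>UU p q. t + j)"
definition FF :: "nat \<Rightarrow> nat \<Rightarrow> nat" where
  "FF p N = (\<Prod>j\<in>{j\<in>{1..N}. \<not> p dvd j}. j)"

lemma fact_FF:
  assumes "prime p"
  shows "fact N = p ^ (N div p) * fact (N div p) * FF p N"
proof (induction N)
  case 0
  then show ?case by (simp add: FF_def)
next
  case (Suc N)
  have p0: "p > 1" using assms prime_gt_1_nat by blast
  show ?case
  proof (cases "p dvd Suc N")
    case True
    then have s: "{j\<in>{1..Suc N}. \<not> p dvd j} = {j\<in>{1..N}. \<not> p dvd j}"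
      using le_Suc_eq by auto
    obtain r where r: "Suc N = p * r" using True by blast
    have d: "Suc N div p = Suc (N div p)"
      using True by (simp add: div_Suc dvd_eq_mod_eq_0)
    have "fact (Suc N) = Suc N * fact N" by simp
    also have "\<dots> = p * Suc (N div p) * (p ^ (N div p) * fact (N div p) * FF p N)"
    proof -
      have "Suc N = p * Suc (N div p)" using r d p0 by simp
      then show ?thesis using Suc by simp
    qed
    also have "\<dots> = p ^ (Suc N div p) * fact (Suc N div p) * FF p (Suc N)"
      unfolding d FF_def s by (simp add: algebra_simps)
    finally show ?thesis by simp
  next
    case False
    then have s: "{j\<in>{1..Suc N}. \<not> p dvd j} = insert (Suc N) {j\<in>{1..N}. \<not> p dvd j}"
      using le_Suc_eq by auto
    have d: "Suc N div p = N div p" using False p0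
      by (simp add: div_Suc dvd_eq_mod_eq_0)
    have f: "finite {j\<in>{1..N}. \<not> p dvd j}" by simp
    have "FF p (Suc N) = Suc N * FF p N" unfolding FF_def s
      by (subst prod.insert[OF f]) auto
    then show ?thesis unfolding d using Suc by (simp add: algebra_simps)
  qed
qed

lemma FF_add:
  assumes "p dvd N" "p dvd q"
  shows "FF p (N + q) = FF p N * ff p q N"
proof -
  have s: "{j\<in>{1..N+q}. \<not> p dvd j} = {j\<in>{1..N}. \<not> p dvd j} \<union> (\<lambda>i. N + i) ` UU p q"
  proof (rule equalityI; rule subsetI)
    fix j assume j: "j \<in> {j\<in>{1..N+q}. \<not> p dvd j}"
    show "j \<in> {j\<in>{1..N}. \<not> p dvd j} \<union> (\<lambda>i. N + i) ` UU p q"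
    proof (cases "j \<le> N")
      case True then show ?thesis using j by auto
    next
      case False
      then have "j = N + (j - N)" by simp
      moreover have "j - N \<in> UU p q" using j False assms(1) unfolding UU_def
        by (auto, metis dvd_add le_add_diff_inverse nat_le_linear)
      ultimately show ?thesis by blast
    qed
  next
    fix j assume "j \<in> {j\<in>{1..N}. \<not> p dvd j} \<union> (\<lambda>i. N + i) ` UU p q"
    then show "j \<in> {j\<in>{1..N+q}. \<not> p dvd j}" using assms(1) unfolding UU_def
      by (auto simp: dvd_add_right_iff)
  qed
  have "FF p (N+q) = (\<Prod>j\<in>{j\<in>{1..N}. \<not> p dvd j}. j) * (\<Prod>j\<in>(\<lambda>i. N + i) ` UU p q. j)"
    unfolding FF_def s by (rule prod.union_disjoint) (auto simp: UU_def)
  also have "(\<Prod>j\<in>(\<lambda>i. N + i) ` UU p q. j) = ff p q N"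
    unfolding ff_def by (subst prod.reindex) (auto simp: inj_on_def)
  finally show ?thesis by (simp add: FF_def)
qed

lemma FF_cong:
  assumes "p dvd q" "\<And>c. [ff p q (c*q) = ff p q 0] (mod M)"
  shows "[FF p (q*x) = ff p q 0 ^ x] (mod M)"
proof (induction x)
  case 0 then show ?case by (simp add: FF_def)
next
  case (Suc x)
  have "FF p (q * Suc x) = FF p (q*x) * ff p q (x*q)"
    using FF_add[of p "q*x" q] assms(1) by (simp add: algebra_simps)
  also have "[\<dots> = ff p q 0 ^ x * ff p q 0] (mod M)"
    by (intro cong_mult Suc assms(2))
  finally show ?case by (simp add: mult.commute)
qed

lemma coprime_ff0:
  assumes "prime p"
  shows "coprime (ff p q 0) p"
  unfolding ff_def
proof (rule prod_coprime_left)
  fix i assume "i \<in> UU p q"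
  then have "\<not> p dvd i" by (simp add: UU_def)
  then have "coprime p i" using prime_imp_coprime[OF assms] by blast
  then show "coprime (0 + i) p" by (simp add: coprime_commute)
qed

lemma binom_step:
  assumes p: "prime p" and q: "q = p * q'" and yx: "y \<le> x"
    and H: "\<And>c. [ff p q (c*q) = ff p q 0] (mod M)" and cop: "coprime (ff p q 0) M"
  shows "[(q*x) choose (q*y) = (q'*x) choose (q'*y)] (mod M)"
proof -
  have p0: "p > 0" using p prime_gt_0_nat by blast
  have pdq: "p dvd q" using q by simp
  have g: "fact (q*z) = p ^ (q'*z) * fact (q'*z) * FF p (q*z)" for z
  proof -
    have "q*z div p = q'*z" using q p0 by simp
    then show ?thesis using fact_FF[OF p, of "q*z"] by simp
  qed
  define C1 where "C1 = (q*x) choose (q*y)"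
  define C2 where "C2 = (q'*x) choose (q'*y)"
  have e1: "fact (q*y) * fact (q*(x-y)) * C1 = (fact (q*x) :: nat)"
    using binomial_fact_lemma[of "q*y" "q*x"] yx unfolding C1_def
    by (simp add: diff_mult_distrib2)
  have e2: "fact (q'*y) * fact (q'*(x-y)) * C2 = (fact (q'*x) :: nat)"
    using binomial_fact_lemma[of "q'*y" "q'*x"] yx unfolding C2_def
    by (simp add: diff_mult_distrib2)
  have pw: "p ^ (q'*y) * p ^ (q'*(x-y)) = p ^ (q'*x)"
    using yx by (simp add: power_add[symmetric] diff_mult_distrib2)
  define K where "K = (p ^ (q'*x) * fact (q'*y) * fact (q'*(x-y)) :: nat)"
  have K0: "K \<noteq> 0" unfolding K_def using p0 by simp
  have "(C1 * (FF p (q*y) * FF p (q*(x-y)))) * K = fact (q*y) * fact (q*(x-y)) * C1"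
    unfolding K_def g pw[symmetric] by (simp add: algebra_simps)
  also have "\<dots> = p ^ (q'*x) * fact (q'*x) * FF p (q*x)" using e1 g by simp
  also have "\<dots> = (C2 * FF p (q*x)) * K" unfolding K_def e2[symmetric] by (simp add: algebra_simps)
  finally have id: "C1 * (FF p (q*y) * FF p (q*(x-y))) = C2 * FF p (q*x)"
    using K0 by simp
  let ?f = "ff p q 0"
  have "[C1 * (FF p (q*y) * FF p (q*(x-y))) = C1 * (?f ^ y * ?f ^ (x-y))] (mod M)"
    by (intro cong_mult cong_refl FF_cong[OF pdq H])
  moreover have "?f ^ y * ?f ^ (x-y) = ?f ^ x" using yx by (simp add: power_add[symmetric])
  moreover have "[C2 * FF p (q*x) = C2 * ?f ^ x] (mod M)"
    by (intro cong_mult cong_refl FF_cong[OF pdq H])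
  ultimately have "[C1 * ?f ^ x = C2 * ?f ^ x] (mod M)"
    using id by (metis cong_sym cong_trans)
  then show ?thesis unfolding C1_def[symmetric] C2_def[symmetric]
    using cong_mult_rcancel_nat[of "?f ^ x" M C1 C2] cop by (simp add: coprime_power_left_iff)
qed

lemma ff_cong_q: "[ff p q (c*q) = ff p q 0] (mod q)"
  unfolding ff_def
  by (rule cong_prod) (simp add: cong_def)

definition VV :: "nat \<Rightarrow> nat \<Rightarrow> nat set" where
  "VV p q = {j \<in> UU p q. 2*j < q}"

lemma expand:
  fixes a :: "nat \<Rightarrow> nat"
  assumes "finite V"
  shows "\<exists>R. (\<Prod>j\<in>V. D + a j) = (\<Prod>j\<in>V. a j) + D * (\<Sum>j\<in>V. \<Prod>i\<in>V-{j}. a i) + D^2 * R"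
  using assms
proof (induction V rule: finite_induct)
  case empty then show ?case by simp
next
  case (insert x V)
  then obtain R where R: "(\<Prod>j\<in>V. D + a j) = (\<Prod>j\<in>V. a j) + D * (\<Sum>j\<in>V. \<Prod>i\<in>V-{j}. a i) + D^2 * R"
    by blast
  define P where "P = (\<Prod>j\<in>V. a j)"
  define S where "S = (\<Sum>j\<in>V. \<Prod>i\<in>V-{j}. a i)"
  have S': "(\<Sum>j\<in>insert x V. \<Prod>i\<in>insert x V-{j}. a i) = P + a x * S"
  proof -
    have "(\<Sum>j\<in>insert x V. \<Prod>i\<in>insert x V-{j}. a i) = (\<Prod>i\<in>V. a i) + (\<Sum>j\<in>V. \<Prod>i\<in>insert x V-{j}. a i)"
      using insert by (simp add: sum.insert)
    also have "(\<Sum>j\<in>V. \<Prod>i\<in>insert x V-{j}. a i) = (\<Sum>j\<in>V. a x * (\<Prod>i\<in>V-{j}. a i))"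
    proof (rule sum.cong)
      fix j assume "j \<in> V"
      then have "insert x V - {j} = insert x (V - {j})" using insert by auto
      then show "(\<Prod>i\<in>insert x V-{j}. a i) = a x * (\<Prod>i\<in>V-{j}. a i)"
        using insert by simp
    qed simp
    finally show ?thesis unfolding P_def S_def by (simp add: sum_distrib_left)
  qed
  have "(\<Prod>j\<in>insert x V. D + a j) = (D + a x) * (P + D * S + D^2 * R)"
    using insert R unfolding P_def S_def by simp
  also have "\<dots> = a x * P + D * (P + a x * S) + D^2 * (S + D * R + a x * R)"
    by (simp add: algebra_simps power2_eq_square)
  finally show ?case using insert S' unfolding P_def by auto
qed

lemma UU_split:
  assumes pq: "p dvd q" and H: "\<forall>j\<in>UU p q. 2*j \<noteq> q"
  shows "UU p q = VV p q \<union> (\<lambda>j. q - j) ` VV p q" and "VV p q \<inter> (\<lambda>j. q - j) ` VV p q = {}"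
    and "inj_on (\<lambda>j. q - j) (VV p q)"
proof -
  show "UU p q = VV p q \<union> (\<lambda>j. q - j) ` VV p q"
  proof (rule equalityI; rule subsetI)
    fix j assume j: "j \<in> UU p q"
    show "j \<in> VV p q \<union> (\<lambda>j. q - j) ` VV p q"
    proof (cases "2*j < q")
      case True then show ?thesis using j by (simp add: VV_def)
    next
      case False
      have jq: "j < q" using j pq unfolding UU_def by (auto simp: le_less)
      have "2*j \<noteq> q" using H j by blast
      have "\<not> p dvd q - j"
      proof
        assume "p dvd q - j"
        then have "p dvd q - (q - j)" using pq by (simp add: dvd_diff_nat)
        then show False using j jq unfolding UU_def by auto
      qed
      then have "q - j \<in> VV p q" using j jq False pq \<open>2*j \<noteq> q\<close> unfolding VV_def UU_def
        by auto
      moreover have "j = q - (q - j)" using jq by simp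
      ultimately show ?thesis by blast
    qed
  next
    fix j assume "j \<in> VV p q \<union> (\<lambda>j. q - j) ` VV p q"
    then show "j \<in> UU p q"
    proof
      assume "j \<in> VV p q" then show ?thesis by (simp add: VV_def)
    next
      assume "j \<in> (\<lambda>j. q - j) ` VV p q"
      then obtain i where i: "i \<in> VV p q" "j = q - i" by blast
      have "\<not> p dvd q - i"
      proof
        assume "p dvd q - i"
        then have "p dvd q - (q - i)" using pq by (simp add: dvd_diff_nat)
        then show False using i unfolding VV_def UU_def by auto
      qed
      then show ?thesis using i unfolding VV_def UU_def by auto
    qed
  qed
  show "VV p q \<inter> (\<lambda>j. q - j) ` VV p q = {}"
    unfolding VV_def UU_def by auto
  show "inj_on (\<lambda>j. q - j) (VV p q)"
    unfolding VV_def UU_def inj_on_def by auto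
qed

lemma ff_pair:
  assumes pq: "p dvd q" and H: "\<forall>j\<in>UU p q. 2*j \<noteq> q"
  shows "ff p q t = (\<Prod>j\<in>VV p q. (t + j) * (t + (q - j)))"
proof -
  have fin: "finite (VV p q)" unfolding VV_def UU_def by simp
  have "ff p q t = (\<Prod>j\<in>VV p q. t + j) * (\<Prod>j\<in>(\<lambda>j. q - j) ` VV p q. t + j)"
    unfolding ff_def UU_split(1)[OF pq H]
    by (rule prod.union_disjoint) (use fin UU_split(2)[OF pq H] in auto)
  also have "(\<Prod>j\<in>(\<lambda>j. q - j) ` VV p q. t + j) = (\<Prod>j\<in>VV p q. t + (q - j))"
    by (subst prod.reindex[OF UU_split(3)[OF pq H]]) simp
  finally show ?thesis by (simp add: prod.distrib)
qed

lemma pair_expr: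
  fixes c q j :: nat
  assumes "j \<le> q"
  shows "(c*q + j) * (c*q + (q - j)) = c*(c+1)*q^2 + j*(q-j)"
proof -
  define r where "r = q - j"
  have r: "q = j + r" using assms unfolding r_def by simp
  have "(c*(j+r) + j) * (c*(j+r) + r) = c*(c+1)*(j+r)^2 + j*r"
    by (simp add: power2_eq_square distrib_left distrib_right ac_simps)
  then show ?thesis unfolding r diff_add_inverse .
qed

lemma ff_expand:
  assumes pq: "p dvd q" and H: "\<forall>j\<in>UU p q. 2*j \<noteq> q"
  shows "\<exists>R. ff p q (c*q) = ff p q 0 + c*(c+1)*q^2 * (\<Sum>j\<in>VV p q. \<Prod>i\<in>VV p q-{j}. i*(q-i))
            + (c*(c+1)*q^2)^2 * R"
proof -
  have fin: "finite (VV p q)" unfolding VV_def UU_def by simp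
  have "ff p q (c*q) = (\<Prod>j\<in>VV p q. c*(c+1)*q^2 + j*(q-j))"
    unfolding ff_pair[OF pq H]
  proof (rule prod.cong)
    fix j assume "j \<in> VV p q"
    then have "j \<le> q" by (simp add: VV_def UU_def)
    then show "(c*q + j) * (c*q + (q - j)) = c*(c+1)*q^2 + j*(q-j)" by (rule pair_expr)
  qed simp
  moreover have "ff p q 0 = (\<Prod>j\<in>VV p q. j*(q-j))"
    unfolding ff_pair[OF pq H] by simp
  ultimately show ?thesis using expand[OF fin, of "c*(c+1)*q^2" "\<lambda>j. j*(q-j)"] by simp
qed

lemma ff_cong_q2:
  assumes pq: "p dvd q" and H: "\<forall>j\<in>UU p q. 2*j \<noteq> q"
  shows "[ff p q (c*q) = ff p q 0] (mod q^2)"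
proof -
  obtain R where R: "ff p q (c*q) = ff p q 0 + c*(c+1)*q^2 * (\<Sum>j\<in>VV p q. \<Prod>i\<in>VV p q-{j}. i*(q-i))
            + (c*(c+1)*q^2)^2 * R" using ff_expand[OF pq H] by blast
  have "ff p q (c*q) = ff p q 0 + q^2 * (c*(c+1) * (\<Sum>j\<in>VV p q. \<Prod>i\<in>VV p q-{j}. i*(q-i))
            + c*(c+1)*(c*(c+1)*q^2) * R)"
    unfolding R by (simp add: algebra_simps power2_eq_square)
  then show ?thesis by (simp add: cong_def)
qed

lemma ff_cong_q3:
  assumes pq: "p dvd q" and H: "\<forall>j\<in>UU p q. 2*j \<noteq> q"
    and S: "q dvd (\<Sum>j\<in>VV p q. \<Prod>i\<in>VV p q-{j}. i*(q-i))"
  shows "[ff p q (c*q) = ff p q 0] (mod q^3)"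
proof -
  obtain R where R: "ff p q (c*q) = ff p q 0 + c*(c+1)*q^2 * (\<Sum>j\<in>VV p q. \<Prod>i\<in>VV p q-{j}. i*(q-i))
            + (c*(c+1)*q^2)^2 * R" using ff_expand[OF pq H] by blast
  obtain s where s: "(\<Sum>j\<in>VV p q. \<Prod>i\<in>VV p q-{j}. i*(q-i)) = q * s" using S by blast
  have "ff p q (c*q) = ff p q 0 + q^3 * (c*(c+1) * s + c*(c+1)*(c*(c+1)*q) * R)"
    unfolding R s by (simp add: algebra_simps power2_eq_square power3_eq_cube)
  then show ?thesis by (simp add: cong_def)
qed



lemma sum_sq6: "6 * (\<Sum>i\<in>{1..n::nat}. i^2) = n*(n+1)*(2*n+1)"
  by (induction n) (auto simp: algebra_simps power2_eq_square)

lemma dvd_sum_sq: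
  assumes "coprime (6::nat) n"
  shows "n dvd (\<Sum>i\<in>{1..n}. i^2)"
proof -
  have "n dvd 6 * (\<Sum>i\<in>{1..n}. i^2)" unfolding sum_sq6 by simp
  moreover have "coprime n 6" using assms by (simp add: coprime_commute)
  ultimately show ?thesis using coprime_dvd_mult_right_iff by blast
qed

lemma H_odd:
  assumes "odd q"
  shows "\<forall>j\<in>UU p q. 2*j \<noteq> q"
  using assms by auto

lemma H_two:
  assumes "s \<ge> 2"
  shows "\<forall>j\<in>UU 2 (2^s). 2*j \<noteq> 2^s"
proof
  fix j assume j: "j \<in> UU 2 (2^s)"
  obtain t where t: "s = Suc t" "t \<ge> 1" using assms by (cases s) auto
  show "2*j \<noteq> 2^s"
  proof
    assume "2*j = 2^s"
    then have "j = 2^t" using t by simp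
    then have "2 dvd j" using t by (cases t) auto
    then show False using j by (simp add: UU_def)
  qed
qed

context
  fixes p q s :: nat
  assumes p: "prime p" and p3: "p > 3" and q: "q = p^s" and s: "s \<ge> 1"
begin

lemma p_odd: "odd p"
  using prime_odd_nat[OF p] p3 by simp

lemma q_odd: "odd q" using p_odd q by simp

lemma q_gt1: "q > 1" using q s prime_gt_1_nat[OF p] one_less_power[of p s] by simp

lemma cop6: "coprime (6::nat) (p^t)"
proof -
  have "coprime 2 p" using p_odd by simp
  moreover have "coprime 3 p"
  proof -
    have "\<not> 3 dvd p"
    proof
      assume "3 dvd p"
      then have "3 = p" using primes_dvd_imp_eq[of 3 p] p by simp
      then show False using p3 by simp
    qed
    moreover have "prime (3::nat)" by simp
    ultimately show ?thesis using prime_imp_coprime by blast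
  qed
  ultimately have "coprime (2*3) p" by (simp only: coprime_mult_left_iff)
  then have "coprime (6::nat) p" by simp
  then show ?thesis by simp
qed

lemma HH: "\<forall>j\<in>UU p q. 2*j \<noteq> q" using H_odd q_odd by blast

lemma R1: "q dvd (\<Sum>j\<in>UU p q. j^2)"
proof -
  define q' where "q' = p^(s-1)"
  have q': "q = p * q'" unfolding q q'_def using s by (cases s) auto
  have p0: "p > 0" using p prime_gt_0_nat by blast
  have split: "{1..q} = UU p q \<union> (\<lambda>i. p*i) ` {1..q'}"
  proof (rule equalityI; rule subsetI)
    fix j assume j: "j \<in> {1..q}"
    show "j \<in> UU p q \<union> (\<lambda>i. p*i) ` {1..q'}"
    proof (cases "p dvd j")
      case True
      then obtain i where i: "j = p*i" by blast
      then have "i \<in> {1..q'}" using j q' p0 by auto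
      then show ?thesis using i by blast
    next
      case False then show ?thesis using j by (simp add: UU_def)
    qed
  next
    fix j assume "j \<in> UU p q \<union> (\<lambda>i. p*i) ` {1..q'}"
    then show "j \<in> {1..q}" using q' p0 by (auto simp: UU_def)
  qed
  have "(\<Sum>j\<in>{1..q}. j^2) = (\<Sum>j\<in>UU p q. j^2) + (\<Sum>j\<in>(\<lambda>i. p*i) ` {1..q'}. j^2)"
    unfolding split by (rule sum.union_disjoint) (auto simp: UU_def)
  also have "(\<Sum>j\<in>(\<lambda>i. p*i) ` {1..q'}. j^2) = p^2 * (\<Sum>i\<in>{1..q'}. i^2)"
    using p0
    by (subst sum.reindex) (auto simp: inj_on_def sum_distrib_left power_mult_distrib)
  finally have eq: "(\<Sum>j\<in>{1..q}. j^2) = (\<Sum>j\<in>UU p q. j^2) + p^2 * (\<Sum>i\<in>{1..q'}. i^2)" .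
  have "q dvd (\<Sum>j\<in>{1..q}. j^2)" using dvd_sum_sq cop6 q by blast
  moreover have "q dvd p^2 * (\<Sum>i\<in>{1..q'}. i^2)"
  proof -
    have "q' dvd (\<Sum>i\<in>{1..q'}. i^2)" using dvd_sum_sq cop6 q'_def by blast
    then obtain z where "(\<Sum>i\<in>{1..q'}. i^2) = q' * z" by blast
    then have "p^2 * (\<Sum>i\<in>{1..q'}. i^2) = q * (p * z)" unfolding q' power2_eq_square by simp
    then show ?thesis by simp
  qed
  ultimately show ?thesis using eq by (simp add: dvd_add_left_iff)
qed

lemma R2: "q dvd (\<Sum>j\<in>VV p q. j^2)"
proof -
  have fin: "finite (VV p q)" unfolding VV_def UU_def by simp
  have pq: "p dvd q" using q s by (simp add: dvd_power)
  have "(\<Sum>j\<in>UU p q. j^2) = (\<Sum>j\<in>VV p q. j^2) + (\<Sum>j\<in>(\<lambda>j. q - j) ` VV p q. j^2)"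
    unfolding UU_split(1)[OF pq HH]
    by (rule sum.union_disjoint) (use fin UU_split(2)[OF pq HH] in auto)
  also have "(\<Sum>j\<in>(\<lambda>j. q - j) ` VV p q. j^2) = (\<Sum>j\<in>VV p q. (q-j)^2)"
    by (subst sum.reindex[OF UU_split(3)[OF pq HH]]) simp
  finally have eq: "(\<Sum>j\<in>UU p q. j^2) = (\<Sum>j\<in>VV p q. j^2) + (\<Sum>j\<in>VV p q. (q-j)^2)" .
  have X: "int (\<Sum>j\<in>UU p q. j^2) = 2 * int (\<Sum>j\<in>VV p q. j^2) + int q * (\<Sum>j\<in>VV p q. int q - 2 * int j)"
  proof -
    have "int ((q-j)^2) = int (j^2) + int q * (int q - 2 * int j)" if "j \<in> VV p q" for j
    proof -
      have jq: "j \<le> q" using that by (simp add: VV_def UU_def)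
      have "int ((q-j)^2) = (int q - int j)^2" using jq by (simp only: of_nat_power of_nat_diff)
      then show ?thesis by (simp add: power2_eq_square algebra_simps)
    qed
    then have "int (\<Sum>j\<in>VV p q. (q-j)^2) = (\<Sum>j\<in>VV p q. int (j^2) + int q * (int q - 2 * int j))"
      unfolding of_nat_sum by (rule sum.cong[OF refl])
    then show ?thesis unfolding eq
      by (simp add: sum.distrib sum_distrib_left of_nat_sum)
  qed
  have "int q dvd int (\<Sum>j\<in>UU p q. j^2)" using R1 by (simp only: int_dvd_int_iff)
  then have "int q dvd 2 * int (\<Sum>j\<in>VV p q. j^2)"
    unfolding X using dvd_add_left_iff dvd_triv_left by blast
  then have "q dvd 2 * (\<Sum>j\<in>VV p q. j^2)"
    by (simp add: int_dvd_int_iff[symmetric])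
  moreover have "coprime q 2" using q_odd by simp
  ultimately show ?thesis using coprime_dvd_mult_right_iff by blast
qed

lemma R3: "q dvd (\<Sum>j\<in>VV p q. j*(q-j))"
proof -
  have Y: "(\<Sum>j\<in>VV p q. j*(q-j)) + (\<Sum>j\<in>VV p q. j^2) = q * (\<Sum>j\<in>VV p q. j)"
  proof -
    have "j*(q-j) + j^2 = q * j" if "j \<in> VV p q" for j
    proof -
      have "j \<le> q" using that by (simp add: VV_def UU_def)
      then have "q = j + (q - j)" by simp
      then obtain r where "q = j + r" by blast
      then show ?thesis by (simp add: power2_eq_square algebra_simps)
    qed
    then show ?thesis by (simp add: sum.distrib[symmetric] sum_distrib_left)
  qed
  have "q dvd (\<Sum>j\<in>VV p q. j*(q-j)) + (\<Sum>j\<in>VV p q. j^2)" unfolding Y by simp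
  then show ?thesis using R2 dvd_add_left_iff by blast
qed


lemma pq_dvd: "p dvd q" using q s by (simp add: dvd_power)

lemma VV_props: assumes "j \<in> VV p q" shows "1 \<le> j" "2*j < q" "\<not> p dvd j" "j \<le> q"
  using assms by (auto simp: VV_def UU_def)

lemma inv_ex:
  assumes jV: "j \<in> VV p q"
  shows "\<exists>r\<in>VV p q. \<exists>e::int. (e = 1 \<or> e = -1) \<and> [int j * int r = e] (mod int q)"
proof -
  have q0: "q > 0" using q_gt1 by simp
  have "coprime j p" using VV_props(3)[OF jV] p by (metis coprime_commute prime_imp_coprime)
  then have "coprime j q" unfolding q by simp
  then obtain x where x: "[j * x = Suc 0] (mod q)" using cong_solve_coprime_nat by blast
  define r0 where "r0 = x mod q"
  have r0: "[j * r0 = 1] (mod q)"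
  proof -
    have "[j * r0 = j * x] (mod q)" unfolding r0_def by (intro cong_mult cong_refl) (simp add: cong_def)
    then show ?thesis using x cong_trans by simp
  qed
  have r0q: "r0 < q" unfolding r0_def using q0 by simp
  have r00: "r0 \<noteq> 0"
  proof
    assume "r0 = 0"
    then have "[0 = 1] (mod q)" using r0 by simp
    then show False using q_gt1 by (simp add: cong_def)
  qed
  have r0p: "\<not> p dvd r0"
  proof
    assume "p dvd r0"
    then have "p dvd j * r0" by simp
    moreover have "[j * r0 = 1] (mod p)" using cong_dvd_modulus_nat[OF r0 pq_dvd] .
    ultimately have "p dvd 1" by (simp add: cong_def dvd_eq_mod_eq_0)
    then show False using p by simp
  qed
  have r0U: "r0 \<in> UU p q" using r00 r0q r0p by (simp add: UU_def)
  have "2 * r0 \<noteq> q" using HH r0U by blast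
  show ?thesis
  proof (cases "2 * r0 < q")
    case True
    then have "r0 \<in> VV p q" using r0U by (simp add: VV_def)
    moreover have "[int j * int r0 = 1] (mod int q)"
      using r0 cong_int_iff[of "j*r0" 1 q] by simp
    ultimately show ?thesis by blast
  next
    case False
    have nd: "\<not> p dvd q - r0"
    proof
      assume "p dvd q - r0"
      then have "p dvd q - (q - r0)" using pq_dvd by (simp add: dvd_diff_nat)
      then show False using r0p r0q by simp
    qed
    have "2*(q-r0) < q" using False \<open>2 * r0 \<noteq> q\<close> r0q by arith
    then have "q - r0 \<in> VV p q" using r0q nd by (simp add: VV_def UU_def)
    moreover have "[int j * int (q - r0) = -1] (mod int q)"
    proof -
      have e: "int j * int (q - r0) = int j * int q - int (j * r0)" using r0q
        by (simp add: of_nat_diff algebra_simps)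
      have "[int j * int q - int (j * r0) = 0 - 1] (mod int q)"
      proof (rule cong_diff)
        show "[int j * int q = 0] (mod int q)" by (simp add: cong_def)
        show "[int (j * r0) = 1] (mod int q)" using r0 cong_int_iff[of "j*r0" 1 q] by simp
      qed
      then show ?thesis unfolding e by simp
    qed
    ultimately show ?thesis by blast
  qed
qed

lemma a_cong: "[int (j*(q-j)) = (- (int j ^ 2))] (mod int q)" if "j \<le> q" for j
proof -
  have "int (j*(q-j)) - (- (int j ^ 2)) = int q * int j" using that
    by (simp add: of_nat_diff algebra_simps power2_eq_square)
  then show ?thesis unfolding cong_iff_dvd_diff by (metis dvd_triv_left)
qed

lemma R5: "q dvd (\<Sum>j\<in>VV p q. \<Prod>i\<in>VV p q-{j}. i*(q-i))"
proof -
  define V where "V = VV p q"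
  define a where "a i = i*(q-i)" for i
  have fin: "finite V" unfolding V_def VV_def UU_def by simp
  from inv_ex have "\<forall>j\<in>V. \<exists>r. r \<in> V \<and> (\<exists>e::int. (e = 1 \<or> e = -1) \<and> [int j * int r = e] (mod int q))"
    unfolding V_def by blast
  then obtain sg where sg: "\<And>j. j \<in> V \<Longrightarrow> sg j \<in> V \<and> (\<exists>e::int. (e = 1 \<or> e = -1) \<and> [int j * int (sg j) = e] (mod int q))"
    by metis
  have inj: "inj_on sg V"
  proof (rule inj_onI)
    fix j j' assume j: "j \<in> V" and j': "j' \<in> V" and eq: "sg j = sg j'"
    obtain e where e: "e = 1 \<or> e = -1" "[int j * int (sg j) = e] (mod int q)" using sg[OF j] by blast
    obtain e' where e': "e' = 1 \<or> e' = -1" "[int j' * int (sg j) = e'] (mod int q)" using sg[OF j'] eq by auto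
    have "[int j * e' = int j * (int j' * int (sg j))] (mod int q)"
      by (intro cong_mult cong_refl) (rule cong_sym[OF e'(2)])
    also have "int j * (int j' * int (sg j)) = int j' * (int j * int (sg j))" by simp
    also have "[\<dots> = int j' * e] (mod int q)" by (intro cong_mult cong_refl e(2))
    finally have c1: "[int j * e' = int j' * e] (mod int q)" .
    have "[int j * e' * e' = int j' * e * e'] (mod int q)" by (intro cong_mult cong_refl c1)
    moreover have "e' * e' = 1" using e'(1) by auto
    ultimately have c2: "[int j = int j' * (e * e')] (mod int q)" by (simp add: mult.assoc)
    have bj: "0 < int j" "2 * int j < int q" using VV_props[of j] j unfolding V_def by auto
    have bj': "0 < int j'" "2 * int j' < int q" using VV_props[of j'] j' unfolding V_def by auto
    show "j = j'"
    proof (cases "e * e' = 1")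
      case True
      then have "[int j = int j'] (mod int q)" using c2 by simp
      then have "int j = int j'" using cong_less_imp_eq_int[of "int j" "int q" "int j'"] bj bj' by auto
      then show ?thesis by simp
    next
      case False
      then have "e * e' = -1" using e(1) e'(1) by auto
      then have "[int j = - int j'] (mod int q)" using c2 by simp
      then have "int q dvd int j + int j'" by (simp add: cong_iff_dvd_diff)
      then have "int q \<le> int j + int j'" by (rule zdvd_imp_le) (use bj bj' in auto)
      then show ?thesis using bj bj' by simp
    qed
  qed
  have img: "sg ` V = V" by (rule endo_inj_surj[OF fin _ inj]) (use sg in blast)
  define P where "P = (\<Prod>i\<in>V. a i)"
  have key: "[(\<Prod>i\<in>V-{j}. a i) = P * a (sg j)] (mod q)" if j: "j \<in> V" for j
  proof -
    have jq: "j \<le> q" using VV_props(4) j unfolding V_def by blast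
    have sjq: "sg j \<le> q" using VV_props(4) sg j unfolding V_def by blast
    obtain e where e: "e = 1 \<or> e = -1" "[int j * int (sg j) = e] (mod int q)" using sg[OF j] by blast
    have "[int (a j) * int (a (sg j)) = (- (int j ^ 2)) * (- (int (sg j) ^ 2))] (mod int q)"
      unfolding a_def by (intro cong_mult a_cong jq sjq)
    also have "(- (int j ^ 2)) * (- (int (sg j) ^ 2)) = (int j * int (sg j))^2" by (simp add: power_mult_distrib)
    also have "[\<dots> = e^2] (mod int q)" by (intro cong_pow e(2))
    also have "e^2 = 1" using e(1) by auto
    finally have "[int (a j * a (sg j)) = int 1] (mod int q)" by simp
    then have aa: "[a j * a (sg j) = 1] (mod q)" using cong_int_iff by blast
    have Pj: "P = a j * (\<Prod>i\<in>V-{j}. a i)" unfolding P_def using fin j by (simp add: prod.remove)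
    have "[(\<Prod>i\<in>V-{j}. a i) * 1 = (\<Prod>i\<in>V-{j}. a i) * (a j * a (sg j))] (mod q)"
      by (intro cong_mult cong_refl cong_sym[OF aa])
    also have "(\<Prod>i\<in>V-{j}. a i) * (a j * a (sg j)) = P * a (sg j)" unfolding Pj by simp
    finally show ?thesis by simp
  qed
  have "[(\<Sum>j\<in>V. \<Prod>i\<in>V-{j}. a i) = (\<Sum>j\<in>V. P * a (sg j))] (mod q)"
    by (rule cong_sum) (use key in blast)
  also have "(\<Sum>j\<in>V. P * a (sg j)) = P * (\<Sum>j\<in>V. a (sg j))" by (simp add: sum_distrib_left)
  also have "(\<Sum>j\<in>V. a (sg j)) = (\<Sum>j\<in>V. a j)"
    using sum.reindex[OF inj, of a] img by simp
  also have "[P * (\<Sum>j\<in>V. a j) = P * 0] (mod q)"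
  proof (intro cong_mult cong_refl)
    show "[(\<Sum>j\<in>V. a j) = 0] (mod q)" using R3 unfolding V_def a_def by (simp add: cong_0_iff)
  qed
  finally show ?thesis unfolding V_def a_def by (simp add: cong_0_iff)
qed

end

lemma chain:
  fixes B :: "nat \<Rightarrow> nat"
  assumes "j \<le> k" and "\<And>t. j < t \<Longrightarrow> t \<le> k \<Longrightarrow> [B t = B (t - 1)] (mod M)"
  shows "[B k = B j] (mod M)"
proof -
  have "t \<le> k \<longrightarrow> [B t = B j] (mod M)" if "j \<le> t" for t
    using that
  proof (induction t rule: dec_induct)
    case base then show ?case by simp
  next
    case (step n)
    show ?case
    proof
      assume "Suc n \<le> k"
      then have "[B (Suc n) = B n] (mod M)" using assms(2)[of "Suc n"] step.hyps by simp
      moreover have "[B n = B j] (mod M)" using step.IH \<open>Suc n \<le> k\<close> by simp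
      ultimately show "[B (Suc n) = B j] (mod M)" using cong_trans by blast
    qed
  qed
  then show ?thesis using assms(1) by simp
qed

lemma gen_step:
  assumes p: "prime p" and s: "s \<ge> 1" and yx: "y \<le> x"
    and H: "\<And>c. [ff p (p^s) (c*p^s) = ff p (p^s) 0] (mod p^e)"
  shows "[(x*p^s) choose (y*p^s) = (x*p^(s-1)) choose (y*p^(s-1))] (mod p^e)"
proof -
  have qq: "p^s = p * p^(s-1)" using s by (cases s) auto
  have cop: "coprime (ff p (p^s) 0) (p^e)" using coprime_ff0[OF p] by simp
  have "[(p^s*x) choose (p^s*y) = (p^(s-1)*x) choose (p^(s-1)*y)] (mod p^e)"
    by (rule binom_step[OF p qq yx H cop])
  then show ?thesis by (simp add: mult.commute)
qed

lemma big_case: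
  assumes p: "prime p" and p3: "p > 3" and s: "s \<ge> 1" and yx: "y \<le> x"
  shows "[(x*p^s) choose (y*p^s) = (x*p^(s-1)) choose (y*p^(s-1))] (mod p^(3*s))"
proof (rule gen_step[OF p s yx])
  fix c
  have "[ff p (p^s) (c*p^s) = ff p (p^s) 0] (mod (p^s)^3)"
    by (rule ff_cong_q3[OF pq_dvd[OF p p3 refl s] HH[OF p p3 refl s] R5[OF p p3 refl s]])
  then show "[ff p (p^s) (c*p^s) = ff p (p^s) 0] (mod p^(3*s))"
    by (simp add: power_mult[symmetric] mult.commute)
qed

lemma odd_case:
  assumes p: "prime p" and po: "odd p" and s: "s \<ge> 1" and yx: "y \<le> x"
  shows "[(x*p^s) choose (y*p^s) = (x*p^(s-1)) choose (y*p^(s-1))] (mod p^(2*s))"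
proof (rule gen_step[OF p s yx])
  fix c
  have pq: "p dvd p^s" using s by (simp add: dvd_power)
  have "[ff p (p^s) (c*p^s) = ff p (p^s) 0] (mod (p^s)^2)"
    by (rule ff_cong_q2[OF pq H_odd]) (use po in simp)
  then show "[ff p (p^s) (c*p^s) = ff p (p^s) 0] (mod p^(2*s))"
    by (simp add: power_mult[symmetric] mult.commute)
qed

lemma two_case:
  assumes s: "s \<ge> 2" and yx: "y \<le> x"
  shows "[(x*2^s) choose (y*2^s) = (x*2^(s-1)) choose (y*2^(s-1))] (mod 2^(2*s))"
proof (rule gen_step[OF two_is_prime_nat _ yx])
  show "1 \<le> s" using s by simp
  fix c
  have pq: "2 dvd (2::nat)^s" using s by (simp add: dvd_power)
  have "[ff 2 (2^s) (c*2^s) = ff 2 (2^s) 0] (mod (2^s)^2)"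
    by (rule ff_cong_q2[OF pq H_two[OF s]])
  then show "[ff 2 (2^s) (c*2^s) = ff 2 (2^s) 0] (mod 2^(2*s))"
    by (simp add: power_mult[symmetric] mult.commute)
qed

lemma one_case:
  assumes p: "prime p" and s: "s \<ge> 1" and yx: "y \<le> x"
  shows "[(x*p^s) choose (y*p^s) = (x*p^(s-1)) choose (y*p^(s-1))] (mod p^s)"
  by (rule gen_step[OF p s yx]) (rule ff_cong_q)

theorem mainTheorem2:
  fixes n m k :: nat
  assumes "m \<le> n" and "k \<ge> 1"
  shows "(\<forall>p::nat. prime p \<and> p > 3 \<longrightarrow>
           [(n * p ^ k) choose (m * p ^ k)
              = (n * p ^ ((k - 1) div 3)) choose (m * p ^ ((k - 1) div 3))] (mod p ^ k))
       \<and> [(n * 2 ^ k) choose (m * 2 ^ k)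
              = (n * 2 ^ (k div 2)) choose (m * 2 ^ (k div 2))] (mod 2 ^ k)
       \<and> [(n * 3 ^ k) choose (m * 3 ^ k)
              = (n * 3 ^ ((k - 1) div 2)) choose (m * 3 ^ ((k - 1) div 2))] (mod 3 ^ k)"
proof (intro conjI allI impI)
  fix p :: nat assume pp: "prime p \<and> p > 3"
  show "[(n * p ^ k) choose (m * p ^ k)
              = (n * p ^ ((k - 1) div 3)) choose (m * p ^ ((k - 1) div 3))] (mod p ^ k)"
  proof (rule chain[where B = "\<lambda>t. (n * p ^ t) choose (m * p ^ t)"])
    show "(k - 1) div 3 \<le> k" by simp
    fix t assume t: "(k - 1) div 3 < t" "t \<le> k"
    have "[(n*p^t) choose (m*p^t) = (n*p^(t-1)) choose (m*p^(t-1))] (mod p^(3*t))"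
      using big_case[of p t m n] pp t assms(1) by simp
    moreover have "p^k dvd p^(3*t)" using t by (intro le_imp_power_dvd) presburger
    ultimately show "[(n*p^t) choose (m*p^t) = (n*p^(t-1)) choose (m*p^(t-1))] (mod p^k)"
      using cong_dvd_modulus_nat by blast
  qed
next
  show "[(n * 2 ^ k) choose (m * 2 ^ k)
              = (n * 2 ^ (k div 2)) choose (m * 2 ^ (k div 2))] (mod 2 ^ k)"
  proof (rule chain[where B = "\<lambda>t. (n * 2 ^ t) choose (m * 2 ^ t)"])
    show "k div 2 \<le> k" by simp
    fix t assume t: "k div 2 < t" "t \<le> k"
    show "[(n*2^t) choose (m*2^t) = (n*2^(t-1)) choose (m*2^(t-1))] (mod 2^k)"
    proof (cases "t \<ge> 2")
      case True
      have "[(n*2^t) choose (m*2^t) = (n*2^(t-1)) choose (m*2^(t-1))] (mod 2^(2*t))"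
        using two_case[of t m n] True assms(1) by simp
      moreover have "(2::nat)^k dvd 2^(2*t)" using t by (intro le_imp_power_dvd) presburger
      ultimately show ?thesis using cong_dvd_modulus_nat by blast
    next
      case False
      then have t1: "t = 1" using t by simp
      have "[(n*2^t) choose (m*2^t) = (n*2^(t-1)) choose (m*2^(t-1))] (mod 2^t)"
        using one_case[of 2 t m n] t1 assms(1) by simp
      moreover have "(2::nat)^k dvd 2^t" using t t1 by (intro le_imp_power_dvd) presburger
      ultimately show ?thesis using cong_dvd_modulus_nat by blast
    qed
  qed
next
  show "[(n * 3 ^ k) choose (m * 3 ^ k)
              = (n * 3 ^ ((k - 1) div 2)) choose (m * 3 ^ ((k - 1) div 2))] (mod 3 ^ k)"
  proof (rule chain[where B = "\<lambda>t. (n * 3 ^ t) choose (m * 3 ^ t)"])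
    show "(k - 1) div 2 \<le> k" by simp
    fix t assume t: "(k - 1) div 2 < t" "t \<le> k"
    have "[(n*3^t) choose (m*3^t) = (n*3^(t-1)) choose (m*3^(t-1))] (mod 3^(2*t))"
      using odd_case[of 3 t m n] t assms(1) by simp
    moreover have "(3::nat)^k dvd 3^(2*t)" using t by (intro le_imp_power_dvd) presburger
    ultimately show "[(n*3^t) choose (m*3^t) = (n*3^(t-1)) choose (m*3^(t-1))] (mod 3^k)"
      using cong_dvd_modulus_nat by blast
  qed
qed

end
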